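(* Identify $E$ with its image under global coordinates. Then: (i) the set of $\mathrm{Spin}(2)$ representation classes in $E$ is exactly $E_2$; (ii) the set of $\mathrm{Pin}(2)$ representation classes in $E$ is $E_2$ together with the points of $E$ lying on the three coordinate axes of $\mathbb{R}^3$; (iii) for each $-2<k<2$, exactly six points of $E_k$ are $\mathrm{Pin}(2)$ representation classes.
   Context: $M$ is a torus with one boundary component; $\pi_1(M)$ is free on $X,Y$, and $K=XYX^{-1}Y^{-1}$. $E=\operatorname{Hom}(\pi_1(M),\mathrm{SU}(2))/\mathrm{SU}(2)$ is identified via $[\sigma]\mapsto(\operatorname{tr}\sigma(X),\operatorname{tr}\sigma(Y),\operatorname{tr}\sigma(XY))$ with $\{(x,y,z)\in[-2,2]^3:-2\le x^2+y^2+z^2-xyz-2\le2\}$, and $E_k=\{(x,y,z)\in E: x^2+y^2+z^2-xyz-2=k\}$ (note $\operatorname{tr}\sigma(K)=x^2+y^2+z^2-xyz-2$). In the quaternionic model ($1,\mathrm{i},\mathrm{j},\mathrm{k}$ = the matrices $\begin{pmatrix}1&0\\0&1\end{pmatrix},\begin{pmatrix}i&0\\0&-i\end{pmatrix},\begin{pmatrix}0&1\\-1&0\end{pmatrix},\begin{pmatrix}0&i\\i&0\end{pmatrix}$), $\mathrm{Spin}(2)=\{\cos\theta+\sin\theta\,\mathrm{j}\}$, $\mathrm{Spin}_-(2)=\{\cos\theta\,\mathrm{k}+\sin\theta\,\mathrm{i}\}$, $\mathrm{Pin}(2)=\mathrm{Spin}(2)\cup\mathrm{Spin}_-(2)$.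 For a subgroup $G\subset\mathrm{SU}(2)$, a point $[\sigma]\in E$ is a $G$ representation class if some representative takes values in $G$. *)

theory Defs
  imports "HOL-Analysis.Analysis"
begin

definition mat2 :: "complex \<Rightarrow> complex \<Rightarrow> complex \<Rightarrow> complex \<Rightarrow> complex^2^2" where
  "mat2 a b c d = vector [vector [a, b], vector [c, d]]"

definition cadjoint :: "complex^2^2 \<Rightarrow> complex^2^2" where
  "cadjoint A = (\<chi> i j. cnj (A $ j $ i))"

definition SU2 :: "(complex^2^2) set" where
  "SU2 = {A. cadjoint A ** A = mat 1 \<and> det A = 1}"

definition smat :: "complex \<Rightarrow> complex^2^2 \<Rightarrow> complex^2^2" (infixl "\<cdot>\<^sub>m" 75) where
  "c \<cdot>\<^sub>m A = (\<chi> i j. c * A $ i $ j)"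

definition q1 :: "complex^2^2" where "q1 = mat2 1 0 0 1"
definition qi :: "complex^2^2" where "qi = mat2 \<i> 0 0 (- \<i>)"
definition qj :: "complex^2^2" where "qj = mat2 0 1 (-1) 0"
definition qk :: "complex^2^2" where "qk = mat2 0 \<i> \<i> 0"

definition Spin2 :: "(complex^2^2) set" where
  "Spin2 = {complex_of_real (cos \<theta>) \<cdot>\<^sub>m q1 + complex_of_real (sin \<theta>) \<cdot>\<^sub>m qj | \<theta>. True}"

definition Spin2_minus :: "(complex^2^2) set" where
  "Spin2_minus = {complex_of_real (cos \<theta>) \<cdot>\<^sub>m qk + complex_of_real (sin \<theta>) \<cdot>\<^sub>m qi | \<theta>. True}"

definition Pin2 :: "(complex^2^2) set" where
  "Pin2 = Spin2 \<union> Spin2_minus"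

text \<open>The trace of the commutator K, in global coordinates.\<close>
definition kappa :: "real \<times> real \<times> real \<Rightarrow> real" where
  "kappa p = (case p of (x, y, z) \<Rightarrow> x^2 + y^2 + z^2 - x*y*z - 2)"

text \<open>The character variety E in global coordinates (x,y,z) = (tr X, tr Y, tr XY).\<close>
definition E :: "(real \<times> real \<times> real) set" where
  "E = {(x, y, z). x \<in> {-2..2} \<and> y \<in> {-2..2} \<and> z \<in> {-2..2}
          \<and> -2 \<le> kappa (x, y, z) \<and> kappa (x, y, z) \<le> 2}"

definition E_level :: "real \<Rightarrow> (real \<times> real \<times> real) set" where
  "E_level k = {p \<in> E. kappa p = k}"

text \<open>A point of E is a G representation class if it is the image of some
  representation (determined by the images A, B of the free generators X, Y)
  taking values in G \<subseteq> SU(2).\<close>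
definition rep_class :: "(complex^2^2) set \<Rightarrow> real \<times> real \<times> real \<Rightarrow> bool" where
  "rep_class G p = (case p of (x, y, z) \<Rightarrow>
     (\<exists>A B. A \<in> SU2 \<and> B \<in> SU2 \<and> A \<in> G \<and> B \<in> G \<and>
        trace A = complex_of_real x \<and> trace B = complex_of_real y \<and>
        trace (A ** B) = complex_of_real z))"

definition coord_axes :: "(real \<times> real \<times> real) set" where
  "coord_axes = {(x, y, z). (y = 0 \<and> z = 0) \<or> (x = 0 \<and> z = 0) \<or> (x = 0 \<and> y = 0)}"

end

theory Submission
  imports Defs
begin

lemma mat2_nth [simp]:
  "mat2 a b c d $ 1 $ 1 = a" "mat2 a b c d $ 1 $ 2 = b"
  "mat2 a b c d $ 2 $ 1 = c" "mat2 a b c d $ 2 $ 2 = d"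
  by (simp_all add: mat2_def)

lemma mat2_eq_iff: "(A::complex^2^2) = B \<longleftrightarrow> A$1$1 = B$1$1 \<and> A$1$2 = B$1$2 \<and> A$2$1 = B$2$1 \<and> A$2$2 = B$2$2"
  by (auto simp: vec_eq_iff forall_2)

lemma mat2_mult: "mat2 a b c d ** mat2 e f g h = mat2 (a*e+b*g) (a*f+b*h) (c*e+d*g) (c*f+d*h)"
  by (simp add: mat2_eq_iff matrix_matrix_mult_def sum_2)

lemma mat2_trace: "trace (mat2 a b c d) = a + d"
  by (simp add: trace_def sum_2)

lemma mat2_det: "det (mat2 a b c d) = a * d - b * c"
  by (simp add: det_2)

lemma mat2_adj: "cadjoint (mat2 a b c d) = mat2 (cnj a) (cnj c) (cnj b) (cnj d)"
  by (simp add: mat2_eq_iff cadjoint_def)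

lemma mat2_one: "mat 1 = mat2 1 0 0 1"
  by (simp add: mat2_eq_iff mat_def)

lemma mat2_smult: "c \<cdot>\<^sub>m mat2 a b d e = mat2 (c*a) (c*b) (c*d) (c*e)"
  by (simp add: mat2_eq_iff smat_def)

lemma mat2_add: "mat2 a b c d + mat2 e f g h = mat2 (a+e) (b+f) (c+g) (d+h)"
  by (simp add: mat2_eq_iff)

definition S :: "real \<Rightarrow> complex^2^2" where
  "S t = mat2 (complex_of_real (cos t)) (complex_of_real (sin t)) (- complex_of_real (sin t)) (complex_of_real (cos t))"
definition M :: "real \<Rightarrow> complex^2^2" where
  "M t = mat2 (complex_of_real (sin t) * \<i>) (complex_of_real (cos t) * \<i>) (complex_of_real (cos t) * \<i>) (- (complex_of_real (sin t) * \<i>))"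

lemma Spin2_eq: "Spin2 = range S"
  by (auto simp: Spin2_def S_def q1_def qj_def mat2_smult mat2_add)

lemma Spin2m_eq: "Spin2_minus = range M"
  by (auto simp: Spin2_minus_def M_def qk_def qi_def mat2_smult mat2_add)

lemma sc1: "sin t * sin t + cos t * cos t = (1::real)"
  by (metis add.commute sin_cos_squared_add3)

lemma S_SU2: "S t \<in> SU2"
  by (simp add: SU2_def S_def mat2_adj mat2_mult mat2_det mat2_one mat2_eq_iff sin_cos_squared_add3 sc1 flip: of_real_mult of_real_add)

lemma M_SU2: "M t \<in> SU2"
proof -
  have e: "complex_of_real (cos t) * complex_of_real (cos t) + complex_of_real (sin t) * complex_of_real (sin t) = 1"
    by (simp add: sin_cos_squared_add3 flip: of_real_mult of_real_add)
  show ?thesis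
    by (simp add: SU2_def M_def mat2_adj mat2_mult mat2_det mat2_one mat2_eq_iff algebra_simps e)
qed

lemma tr_S: "trace (S t) = complex_of_real (2 * cos t)"
  by (simp add: S_def mat2_trace)
lemma tr_M: "trace (M t) = 0"
  by (simp add: M_def mat2_trace)
lemma tr_SS: "trace (S a ** S b) = complex_of_real (2 * cos (a+b))"
  by (simp add: S_def mat2_trace mat2_mult cos_add algebra_simps)
lemma tr_SM: "trace (S a ** M b) = 0"
  by (simp add: S_def M_def mat2_trace mat2_mult algebra_simps)
lemma tr_MS: "trace (M a ** S b) = 0"
  by (simp add: S_def M_def mat2_trace mat2_mult algebra_simps)
lemma tr_MM: "trace (M a ** M b) = complex_of_real (- 2 * cos (a - b))"
  by (simp add: M_def mat2_trace mat2_mult cos_diff algebra_simps)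

lemma ofr_eq: "complex_of_real u = complex_of_real v \<longleftrightarrow> u = v" by simp
lemma tr_eq: "trace A = complex_of_real x \<Longrightarrow> trace A = complex_of_real v \<Longrightarrow> x = v" by simp
lemma tr_eq0: "trace A = complex_of_real x \<Longrightarrow> trace A = 0 \<Longrightarrow> x = 0" by simp

lemma rep_Spin: "rep_class Spin2 (x,y,z) \<longleftrightarrow> (\<exists>a b. x = 2*cos a \<and> y = 2*cos b \<and> z = 2*cos(a+b))"
proof
  assume "rep_class Spin2 (x,y,z)"
  then obtain a b where "trace (S a) = complex_of_real x" "trace (S b) = complex_of_real y" "trace (S a ** S b) = complex_of_real z"
    unfolding rep_class_def Spin2_eq by auto
  then show "\<exists>a b. x = 2*cos a \<and> y = 2*cos b \<and> z = 2*cos(a+b)"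
    unfolding tr_S tr_SS ofr_eq by metis
next
  assume "\<exists>a b. x = 2*cos a \<and> y = 2*cos b \<and> z = 2*cos(a+b)"
  then obtain a b where "x = 2*cos a \<and> y = 2*cos b \<and> z = 2*cos(a+b)" by blast
  then show "rep_class Spin2 (x,y,z)" unfolding rep_class_def Spin2_eq prod.case
    by (intro exI[of _ "S a"] exI[of _ "S b"]) (auto simp: S_SU2 tr_S tr_SS simp del: of_real_mult of_real_numeral)
qed

lemma rep_Pin: "rep_class Pin2 (x,y,z) \<longleftrightarrow> (\<exists>a b. x = 2*cos a \<and> y = 2*cos b \<and> z = 2*cos(a+b))
   \<or> (\<exists>a. x = 2*cos a \<and> y = 0 \<and> z = 0) \<or> (\<exists>b. x = 0 \<and> y = 2*cos b \<and> z = 0)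
   \<or> (\<exists>a b. x = 0 \<and> y = 0 \<and> z = -2*cos(a-b))" (is "_ \<longleftrightarrow> ?R")
proof
  assume "rep_class Pin2 (x,y,z)"
  then obtain A B where AB: "A \<in> range S \<union> range M" "B \<in> range S \<union> range M" "trace A = complex_of_real x" "trace B = complex_of_real y" "trace (A ** B) = complex_of_real z"
    unfolding rep_class_def Pin2_def Spin2_eq Spin2m_eq by auto
  show ?R
  proof (cases "A \<in> range S")
    case True
    then obtain a where a: "A = S a" by auto
    show ?thesis
    proof (cases "B \<in> range S")
      case True
      then obtain b where "B = S b" by auto
      then show ?thesis using AB a tr_eq[OF _ tr_S] tr_eq[OF _ tr_SS] by metis
    next
      case False
      then obtain b where "B = M b" using AB by auto
      then show ?thesis using AB a tr_eq[OF _ tr_S] tr_eq0[OF _ tr_M] tr_eq0[OF _ tr_SM] by metis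
    qed
  next
    case False
    then obtain a where a: "A = M a" using AB by auto
    show ?thesis
    proof (cases "B \<in> range S")
      case True
      then obtain b where "B = S b" by auto
      then show ?thesis using AB a tr_eq[OF _ tr_S] tr_eq0[OF _ tr_M] tr_eq0[OF _ tr_MS] by metis
    next
      case False
      then obtain b where "B = M b" using AB by auto
      then show ?thesis using AB a tr_eq0[OF _ tr_M] tr_eq[OF _ tr_MM] by metis
    qed
  qed
next
  have SP: "S t \<in> Pin2" "M t \<in> Pin2" for t by (auto simp: Pin2_def Spin2_eq Spin2m_eq)
  assume ?R
  then show "rep_class Pin2 (x,y,z)" unfolding rep_class_def prod.case
  proof (elim disjE exE conjE)
    fix a b assume "x = 2*cos a" "y = 2*cos b" "z = 2*cos(a+b)"
    then show "\<exists>A B. A \<in> SU2 \<and> B \<in> SU2 \<and> A \<in> Pin2 \<and> B \<in> Pin2 \<and> trace A = complex_of_real x \<and> trace B = complex_of_real y \<and> trace (A ** B) = complex_of_real z"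
      using S_SU2 SP tr_S tr_SS by blast
  next
    fix a assume "x = 2*cos a" "y = 0" "z = 0"
    then show "\<exists>A B. A \<in> SU2 \<and> B \<in> SU2 \<and> A \<in> Pin2 \<and> B \<in> Pin2 \<and> trace A = complex_of_real x \<and> trace B = complex_of_real y \<and> trace (A ** B) = complex_of_real z"
      using S_SU2 M_SU2 SP tr_S tr_M tr_SM by (metis of_real_0)
  next
    fix b assume "x = 0" "y = 2*cos b" "z = 0"
    then show "\<exists>A B. A \<in> SU2 \<and> B \<in> SU2 \<and> A \<in> Pin2 \<and> B \<in> Pin2 \<and> trace A = complex_of_real x \<and> trace B = complex_of_real y \<and> trace (A ** B) = complex_of_real z"
      using S_SU2 M_SU2 SP tr_S tr_M tr_MS by (metis of_real_0)
  next
    fix a b assume "x = 0" "y = 0" "z = -2*cos(a-b)"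
    then show "\<exists>A B. A \<in> SU2 \<and> B \<in> SU2 \<and> A \<in> Pin2 \<and> B \<in> Pin2 \<and> trace A = complex_of_real x \<and> trace B = complex_of_real y \<and> trace (A ** B) = complex_of_real z"
      using M_SU2 SP tr_M tr_MM by (metis of_real_0)
  qed
qed

lemma kappa_spin: "kappa (2*cos a, 2*cos b, 2*cos(a+b)) = 2"
proof -
  have h: "sin a ^2 + cos a ^2 = 1" "sin b ^2 + cos b ^2 = 1" by simp_all
  show ?thesis unfolding kappa_def cos_add prod.case using h by algebra
qed

lemma spin_of_kappa:
  assumes "x \<in> {-2..2}" "y \<in> {-2..2}" "kappa (x,y,z) = 2"
  shows "\<exists>a b. x = 2*cos a \<and> y = 2*cos b \<and> z = 2*cos(a+b)"
proof -
  define a where "a = arccos (x/2)"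
  define b where "b = arccos (y/2)"
  have ca: "x = 2*cos a" using assms(1) by (simp add: a_def cos_arccos)
  have cb: "y = 2*cos b" using assms(2) by (simp add: b_def cos_arccos)
  have h: "sin a ^2 + cos a ^2 = 1" "sin b ^2 + cos b ^2 = 1" by simp_all
  have "(z - 2*cos(a+b)) * (z - 2*cos(a-b)) = kappa (x,y,z) - 2"
    unfolding ca cb kappa_def cos_add cos_diff prod.case using h by algebra
  then have "z = 2*cos(a+b) \<or> z = 2*cos(a + -b)" using assms(3) by simp
  then show ?thesis using ca cb by (metis cos_minus)
qed

theorem corollary3p2:
  shows "{p \<in> E. rep_class Spin2 p} = E_level 2
       \<and> {p \<in> E. rep_class Pin2 p} = E_level 2 \<union> (E \<inter> coord_axes)
       \<and> (\<forall>k::real. -2 < k \<and> k < 2 \<longrightarrow> card {p \<in> E_level k. rep_class Pin2 p} = 6)"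
proof -
  have cb: "-2 \<le> 2 * cos t" "2 * cos t \<le> 2" for t :: real
    by (simp_all add: cos_ge_minus_one)
  have A: "{p \<in> E. rep_class Spin2 p} = E_level 2"
  proof safe
    fix x y z assume "(x,y,z) \<in> E" "rep_class Spin2 (x,y,z)"
    then show "(x,y,z) \<in> E_level 2" using kappa_spin by (auto simp: E_level_def rep_Spin)
  next
    fix x y z assume "(x,y,z) \<in> E_level 2"
    then show "(x,y,z) \<in> E" "rep_class Spin2 (x,y,z)"
      using spin_of_kappa[of x y z] by (auto simp: E_level_def E_def rep_Spin)
  qed
  have B': "rep_class Pin2 (x,y,z) \<longleftrightarrow> kappa (x,y,z) = 2 \<or> (x,y,z) \<in> coord_axes" if E: "(x,y,z) \<in> E" for x y z
  proof
    assume "rep_class Pin2 (x,y,z)"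
    then show "kappa (x,y,z) = 2 \<or> (x,y,z) \<in> coord_axes" using kappa_spin by (auto simp: rep_Pin coord_axes_def)
  next
    have bx: "x \<in> {-2..2}" "y \<in> {-2..2}" "z \<in> {-2..2}" using E by (auto simp: E_def)
    assume "kappa (x,y,z) = 2 \<or> (x,y,z) \<in> coord_axes"
    then consider "kappa (x,y,z) = 2" | "y = 0 \<and> z = 0" | "x = 0 \<and> z = 0" | "x = 0 \<and> y = 0" by (auto simp: coord_axes_def)
    then show "rep_class Pin2 (x,y,z)"
    proof cases
      case 1
      then show ?thesis using spin_of_kappa[of x y z] bx by (auto simp: rep_Pin)
    next
      case 2
      have "x = 2 * cos (arccos (x/2))" using bx by (simp add: cos_arccos)
      then show ?thesis using 2 unfolding rep_Pin by blast
    next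
      case 3
      have "y = 2 * cos (arccos (y/2))" using bx by (simp add: cos_arccos)
      then show ?thesis using 3 unfolding rep_Pin by blast
    next
      case 4
      have "z = -2 * cos (arccos (-z/2) - 0)" using bx by (simp add: cos_arccos)
      then show ?thesis using 4 unfolding rep_Pin by blast
    qed
  qed
  have B: "{p \<in> E. rep_class Pin2 p} = E_level 2 \<union> (E \<inter> coord_axes)"
  proof (rule set_eqI)
    fix p :: "real \<times> real \<times> real"
    obtain x y z where p: "p = (x,y,z)" by (cases p) auto
    show "p \<in> {p \<in> E. rep_class Pin2 p} \<longleftrightarrow> p \<in> E_level 2 \<union> (E \<inter> coord_axes)"
      unfolding p using B'[of x y z] by (auto simp: E_level_def)
  qed
  have C: "card {p \<in> E_level k. rep_class Pin2 p} = 6" if k: "-2 < k" "k < 2" for k :: real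
  proof -
    define s where "s = sqrt (k+2)"
    have s0: "s > 0" using k by (simp add: s_def)
    have s2: "s^2 = k + 2" using k by (simp add: s_def)
    have sl: "s < 2" using k s2 power_less_imp_less_base[of s 2 2] by simp
    have sq: "-2 \<le> t \<and> t \<le> 2" if "t^2 = k+2" for t :: real
    proof -
      have "\<bar>t\<bar>^2 < 2^2" using that k by simp
      then have "\<bar>t\<bar> < 2" using power_less_imp_less_base[of "\<bar>t\<bar>" 2 2] by simp
      then show ?thesis by linarith
    qed
    have "{p \<in> E_level k. rep_class Pin2 p} = {p \<in> E_level k. p \<in> E \<and> rep_class Pin2 p}"
      by (auto simp: E_level_def)
    also have "\<dots> = {p \<in> E_level k. p \<in> coord_axes}"
      using B' k by (auto simp: E_level_def)
    also have "\<dots> = {(s,0,0),(-s,0,0),(0,s,0),(0,-s,0),(0,0,s),(0,0,-s)}"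
    proof (rule set_eqI)
      fix p :: "real \<times> real \<times> real"
      obtain x y z where p: "p = (x,y,z)" by (cases p) auto
      have "(x,y,z) \<in> E_level k \<and> (x,y,z) \<in> coord_axes \<longleftrightarrow> (x^2 = s^2 \<and> y = 0 \<and> z = 0) \<or> (y^2 = s^2 \<and> x = 0 \<and> z = 0) \<or> (z^2 = s^2 \<and> x = 0 \<and> y = 0)"
        using s0 s2 sl k sq by (auto simp: E_level_def E_def kappa_def coord_axes_def abs_square_le_1 power2_eq_iff)
      then show "p \<in> {p \<in> E_level k. p \<in> coord_axes} \<longleftrightarrow> p \<in> {(s,0,0),(-s,0,0),(0,s,0),(0,-s,0),(0,0,s),(0,0,-s)}"
        unfolding p using power2_eq_iff by auto
    qed
    also have "card \<dots> = 6" using s0 by simp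
    finally show ?thesis .
  qed
  show ?thesis using A B C by blast
qed

end
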